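(* Let $n\geq2$, $\overline{r},M,\widetilde{\delta},L>0$, $0<\alpha<1$, $k>0$, $k\neq1$. Let $\Omega\subset\mathbb{R}^n$ be a bounded domain with $|\Omega|\leq M\overline{r}^{\,n}$ and $\partial\Omega$ of class $C^{1,\alpha}$ with constants $\overline{r},L$. Let $D$ be a bounded open set compactly contained in $\Omega$ such that $\Omega\setminus\overline{D}$ is connected, $\mathrm{dist}(D,\partial\Omega)\geq\widetilde\delta$, and $\partial D$ is of class $C^{1,\alpha}$ with constants $\overline{r},L$. Then for every $P\in\partial D$ there exists a continuous path $\gamma$ in $\Omega\setminus\overline{D}$ with one end-point at $P$ and the other on $\partial\Omega$, such that for every $z\in\gamma$ $$|z-P|\leq c\,\mathrm{dist}(z,D),$$ where $c>0$ depends only on $k,n,\overline{r},M,\widetilde\delta,L,\alpha$.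
   Context: $\partial U$ of class $C^{1,\alpha}$ with constants $\overline{r},L$ means: for every $P\in\partial U$ there is a rigid change of coordinates with $P=0$ and $U\cap B_{\overline{r}}(0)=\{x=(x',x_n)\in B_{\overline{r}}(0): x_n>\varphi(x')\}$, where $\varphi\in C^{1,\alpha}(B_{\overline{r}}(0))$, $B_{\overline{r}}(0)\subset\mathbb{R}^{n-1}$, $\varphi(0)=|\nabla\varphi(0)|=0$, $\|\varphi\|_{L^\infty}+\overline{r}\|\nabla\varphi\|_{L^\infty}+\overline{r}^{1+\alpha}|\nabla\varphi|_{\alpha}\leq L\overline{r}$ ($|\cdot|_\alpha$ the $\alpha$-Hölder seminorm). *)

theory Defs
  imports "HOL-Analysis.Analysis"
begin

text \<open>Local coordinates at P: y = R (x - P) with R an orthogonal transformation;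
  the distinguished ("n-th") direction is a basis vector e, the hyperplane
  {y. y \<bullet> e = 0} plays the role of R^{n-1}, x' = y - (y\<bullet>e) e and x_n = y \<bullet> e.
  The gradient of phi is g x' (a vector in the hyperplane).
  The sup-norms / Hoelder seminorm are expressed through bounds A, B, C.\<close>

definition C1alpha_boundary :: "real \<Rightarrow> real \<Rightarrow> real \<Rightarrow> 'a::euclidean_space set \<Rightarrow> bool" where
  "C1alpha_boundary \<alpha> r L U \<longleftrightarrow>
    (\<forall>P\<in>frontier U. \<exists>R e (\<phi>::'a \<Rightarrow> real) (g::'a \<Rightarrow> 'a) A B C.
       orthogonal_transformation R \<and> e \<in> Basis \<and>
       (let H = {y. y \<bullet> e = 0}; B' = H \<inter> ball 0 r in
         (\<lambda>x. R (x - P)) ` U \<inter> ball 0 r = {y \<in> ball 0 r. y \<bullet> e > \<phi> (y - (y \<bullet> e) *\<^sub>R e)} \<and>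
         (\<forall>x'\<in>B'. g x' \<in> H \<and> (\<phi> has_derivative (\<lambda>h. g x' \<bullet> h)) (at x' within H)) \<and>
         \<phi> 0 = 0 \<and> norm (g 0) = 0 \<and>
         (\<forall>x'\<in>B'. \<bar>\<phi> x'\<bar> \<le> A) \<and>
         (\<forall>x'\<in>B'. norm (g x') \<le> B) \<and>
         (\<forall>x'\<in>B'. \<forall>y'\<in>B'. norm (g x' - g y') \<le> C * norm (x' - y') powr \<alpha>) \<and>
         A + r * B + r powr (1 + \<alpha>) * C \<le> L * r))"

end

theory Submission
  imports Defs
begin

definition chart :: "real \<Rightarrow> real \<Rightarrow> 'a::euclidean_space set \<Rightarrow> 'a \<Rightarrow> 'a \<Rightarrow> ('a \<Rightarrow> real) \<Rightarrow> bool" where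
 "chart r L U p \<nu> \<Phi> \<longleftrightarrow> norm \<nu> = 1 \<and> \<Phi> p = 0 \<and>
    (\<forall>x\<in>ball p r. x \<in> U \<longleftrightarrow> (x - p) \<bullet> \<nu> > \<Phi> x) \<and>
    (\<forall>x\<in>ball p r. \<forall>y\<in>ball p r. \<bar>\<Phi> x - \<Phi> y\<bar> \<le> L * dist x y) \<and>
    (\<forall>x t. \<Phi> (x + t *\<^sub>R \<nu>) = \<Phi> x)"

lemma proj_norm_le:
  fixes v e :: "'a::euclidean_space"
  assumes "norm e = 1"
  shows "norm (v - (v \<bullet> e) *\<^sub>R e) \<le> norm v"
proof -
  have ee: "e \<bullet> e = 1" using assms by (simp add: norm_eq_1)
  have "(v - (v \<bullet> e) *\<^sub>R e) \<bullet> (v - (v \<bullet> e) *\<^sub>R e) = v \<bullet> v - (v \<bullet> e)\<^sup>2"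
    by (simp add: inner_diff_left inner_diff_right ee inner_commute power2_eq_square)
  then have "(norm (v - (v \<bullet> e) *\<^sub>R e))\<^sup>2 = v \<bullet> v - (v \<bullet> e)\<^sup>2"
    by (simp add: power2_norm_eq_inner)
  also have "\<dots> \<le> (norm v)\<^sup>2" by (simp add: power2_norm_eq_inner)
  finally show ?thesis using power2_le_imp_le by fastforce
qed

lemma chart_exists:
  fixes U :: "'a::euclidean_space set"
  assumes C: "C1alpha_boundary \<alpha> r L U" and P: "P \<in> frontier U"
    and dim: "DIM('a) \<ge> 2" and r: "r > 0"
  shows "\<exists>\<nu> \<Phi>. chart r L U P \<nu> \<Phi>"
proof -
  obtain R :: "'a \<Rightarrow> 'a" and e :: 'a and \<phi> :: "'a \<Rightarrow> real" and g :: "'a \<Rightarrow> 'a" and A B Cc where R: "orthogonal_transformation R" and e: "e \<in> Basis"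
    and graph: "(\<lambda>x. R (x - P)) ` U \<inter> ball 0 r = {y \<in> ball 0 r. y \<bullet> e > \<phi> (y - (y \<bullet> e) *\<^sub>R e)}"
    and der: "\<forall>x'\<in>{y. y \<bullet> e = 0} \<inter> ball 0 r. g x' \<in> {y. y \<bullet> e = 0} \<and> (\<phi> has_derivative (\<lambda>h. g x' \<bullet> h)) (at x' within {y. y \<bullet> e = 0})"
    and phi0: "\<phi> 0 = 0"
    and Abd: "\<forall>x'\<in>{y. y \<bullet> e = 0} \<inter> ball 0 r. \<bar>\<phi> x'\<bar> \<le> A"
    and Bbd: "\<forall>x'\<in>{y. y \<bullet> e = 0} \<inter> ball 0 r. norm (g x') \<le> B"
    and Cbd: "\<forall>x'\<in>{y. y \<bullet> e = 0} \<inter> ball 0 r. \<forall>y'\<in>{y. y \<bullet> e = 0} \<inter> ball 0 r. norm (g x' - g y') \<le> Cc * norm (x' - y') powr \<alpha>"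
    and sumb: "A + r * B + r powr (1 + \<alpha>) * Cc \<le> L * r"
  proof -
    from C P obtain R :: "'a \<Rightarrow> 'a" and e :: 'a and \<phi> :: "'a \<Rightarrow> real" and g :: "'a \<Rightarrow> 'a" and A B Cc
      where 1: "orthogonal_transformation R" "e \<in> Basis" and
      2: "let H = {y. y \<bullet> e = 0}; B' = H \<inter> ball 0 r in
         (\<lambda>x. R (x - P)) ` U \<inter> ball 0 r = {y \<in> ball 0 r. y \<bullet> e > \<phi> (y - (y \<bullet> e) *\<^sub>R e)} \<and>
         (\<forall>x'\<in>B'. g x' \<in> H \<and> (\<phi> has_derivative (\<lambda>h. g x' \<bullet> h)) (at x' within H)) \<and>
         \<phi> 0 = 0 \<and> norm (g 0) = 0 \<and>
         (\<forall>x'\<in>B'. \<bar>\<phi> x'\<bar> \<le> A) \<and>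
         (\<forall>x'\<in>B'. norm (g x') \<le> B) \<and>
         (\<forall>x'\<in>B'. \<forall>y'\<in>B'. norm (g x' - g y') \<le> Cc * norm (x' - y') powr \<alpha>) \<and>
         A + r * B + r powr (1 + \<alpha>) * Cc \<le> L * r"
      unfolding C1alpha_boundary_def by blast
    from 2 show ?thesis unfolding Let_def using that[OF 1] by blast
  qed
  define H where "H = {y::'a. y \<bullet> e = 0}"
  define B' where "B' = H \<inter> ball 0 r"
  have lin: "linear R" using R by (simp add: orthogonal_transformation_linear)
  have nR: "\<And>x. norm (R x) = norm x" using R by (simp add: orthogonal_transformation_norm)
  have iR: "\<And>v w. R v \<bullet> R w = v \<bullet> w" using R by (simp add: orthogonal_transformation_def)
  have injR: "inj R" using R by (simp add: orthogonal_transformation_inj)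
  obtain \<nu> where nu: "R \<nu> = e" using orthogonal_transformation_surj[OF R] by (metis surjD)
  have ee: "e \<bullet> e = 1" using e by simp
  have nnu: "norm \<nu> = 1" using nR[of \<nu>] nu e by simp
  define pr where "pr = (\<lambda>y::'a. y - (y \<bullet> e) *\<^sub>R e)"
  define \<Phi> where "\<Phi> = (\<lambda>x. \<phi> (pr (R (x - P))))"
  have prH: "pr y \<in> H" for y by (simp add: pr_def H_def inner_diff_left ee)
  have prn: "norm (pr y) \<le> norm y" for y unfolding pr_def using proj_norm_le[of e y] e by simp
  have prlin: "pr y - pr z = pr (y - z)" for y z by (simp add: pr_def algebra_simps inner_diff_left)
  have 0: "0 \<in> B'" using r by (simp add: B'_def H_def)
  obtain b where b: "b \<in> Basis" "b \<noteq> e"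
  proof -
    have "card (Basis::'a set) \<ge> (2::nat)" using dim by simp
    moreover have "Basis - {e} = {} \<Longrightarrow> card (Basis::'a set) \<le> 1"
      using card_mono[of "{e}" "Basis::'a set"] by auto
    ultimately have "Basis - {e} \<noteq> {}" by linarith
    then show ?thesis using that by blast
  qed
  have bB: "(r/2) *\<^sub>R b \<in> B'" using b r e by (simp add: B'_def H_def inner_not_same_Basis)
  have "0 \<le> norm (g 0 - g ((r/2) *\<^sub>R b))" by simp
  also have "\<dots> \<le> Cc * norm (0 - (r/2) *\<^sub>R b) powr \<alpha>" using Cbd 0 bB unfolding B'_def H_def by blast
  finally have "0 \<le> Cc * (r/2) powr \<alpha>" using b r by simp
  then have Cc0: "Cc \<ge> 0" using r by (simp add: zero_le_mult_iff)
  have "\<bar>\<phi> 0\<bar> \<le> A" using Abd 0 unfolding B'_def H_def by blast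
  then have A0: "A \<ge> 0" using phi0 by simp
  have "r * B \<le> L * r" using sumb A0 Cc0 r by (smt (verit) mult_nonneg_nonneg powr_ge_zero)
  then have BL: "B \<le> L" using r by (simp add: mult.commute)
  have "norm (g 0) \<le> B" using Bbd 0 unfolding B'_def H_def by blast
  then have L0: "L \<ge> 0" using BL norm_ge_zero[of "g 0"] by linarith
  have Lip: "\<bar>\<phi> a - \<phi> c\<bar> \<le> L * norm (a - c)" if "a \<in> B'" "c \<in> B'" for a c
  proof -
    have cvx: "convex B'" unfolding B'_def H_def
      by (intro convex_Int convex_ball subspace_imp_convex[OF subspace_hyperplane2])
    have "norm (\<phi> a - \<phi> c) \<le> B * norm (a - c)"
    proof (rule differentiable_bound[OF cvx, of \<phi> "\<lambda>x' h. g x' \<bullet> h"])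
      fix x assume x: "x \<in> B'"
      then have "(\<phi> has_derivative (\<lambda>h. g x \<bullet> h)) (at x within H)" using der by (simp add: B'_def H_def)
      then show "(\<phi> has_derivative (\<lambda>h. g x \<bullet> h)) (at x within B')"
        by (rule has_derivative_subset) (simp add: B'_def)
      show "onorm (\<lambda>h. g x \<bullet> h) \<le> B"
      proof (rule order_trans[OF onorm_bound])
        show "0 \<le> norm (g x)" by simp
        show "norm (g x \<bullet> h) \<le> norm (g x) * norm h" for h by (simp add: Cauchy_Schwarz_ineq2)
        show "norm (g x) \<le> B" using Bbd x by (simp add: B'_def H_def)
      qed
    qed (use that in auto)
    also have "\<dots> \<le> L * norm (a - c)" using BL by (simp add: mult_right_mono)
    finally show ?thesis by simp
  qed
  have inB: "pr (R (x - P)) \<in> B'" if "x \<in> ball P r" for x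
    using prH prn[of "R (x - P)"] nR[of "x - P"] that by (simp add: B'_def dist_norm norm_minus_commute)
  have "chart r L U P \<nu> \<Phi>"
    unfolding chart_def
  proof (intro conjI ballI allI)
    show "norm \<nu> = 1" by (fact nnu)
    show "\<Phi> P = 0" by (simp add: \<Phi>_def pr_def linear_0[OF lin] phi0)
  next
    fix x assume x: "x \<in> ball P r"
    have xb: "R (x - P) \<in> ball 0 r" using x nR[of "x - P"] by (simp add: dist_norm norm_minus_commute)
    have ip: "(x - P) \<bullet> \<nu> = R (x - P) \<bullet> e" using iR nu by metis
    have "x \<in> U \<longleftrightarrow> R (x - P) \<in> (\<lambda>x. R (x - P)) ` U"
    proof
      assume "R (x - P) \<in> (\<lambda>x. R (x - P)) ` U"
      then obtain x' where x': "x' \<in> U" and eq: "R (x - P) = R (x' - P)" by auto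
      from injD[OF injR eq] have "x = x'" by simp
      with x' show "x \<in> U" by simp
    qed auto
    also have "\<dots> \<longleftrightarrow> R (x - P) \<in> {y \<in> ball 0 r. y \<bullet> e > \<phi> (y - (y \<bullet> e) *\<^sub>R e)}"
      using graph xb by blast
    also have "\<dots> \<longleftrightarrow> (x - P) \<bullet> \<nu> > \<Phi> x" using xb ip by (simp add: \<Phi>_def pr_def)
    finally show "x \<in> U \<longleftrightarrow> (x - P) \<bullet> \<nu> > \<Phi> x" .
  next
    fix x y assume x: "x \<in> ball P r" and y: "y \<in> ball P r"
    have 1: "\<bar>\<Phi> x - \<Phi> y\<bar> \<le> L * norm (pr (R (x - P)) - pr (R (y - P)))"
      unfolding \<Phi>_def by (rule Lip[OF inB[OF x] inB[OF y]])
    have "norm (pr (R (x - P)) - pr (R (y - P))) = norm (pr (R (x - y)))"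
      by (simp add: prlin linear_diff[OF lin, symmetric])
    also have "\<dots> \<le> norm (x - y)" using prn nR by metis
    finally have 2: "norm (pr (R (x - P)) - pr (R (y - P))) \<le> dist x y" by (simp add: dist_norm)
    have "\<bar>\<Phi> x - \<Phi> y\<bar> \<le> L * dist x y"
      using 1 mult_left_mono[OF 2 L0] by linarith
    then show "\<bar>\<Phi> x - \<Phi> y\<bar> \<le> L * dist x y" .
  next
    fix x t
    have "R (x + t *\<^sub>R \<nu> - P) = R (x - P) + t *\<^sub>R e"
    proof -
      have eq: "x + t *\<^sub>R \<nu> - P = (x - P) + t *\<^sub>R \<nu>" by (simp add: algebra_simps)
      show ?thesis unfolding eq linear_add[OF lin] linear_scale[OF lin] nu ..
    qed
    then show "\<Phi> (x + t *\<^sub>R \<nu>) = \<Phi> x"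
      by (simp add: \<Phi>_def pr_def inner_add_left ee algebra_simps)
  qed
  then show ?thesis by blast
qed

lemma seg_pc:
  fixes a b :: "'a::euclidean_space"
  assumes "\<And>u. 0 \<le> u \<Longrightarrow> u \<le> 1 \<Longrightarrow> (1 - u) *\<^sub>R a + u *\<^sub>R b \<in> S"
  shows "path_component S a b"
  unfolding path_component_def
proof (intro exI conjI)
  show "path (linepath a b)" by simp
  show "path_image (linepath a b) \<subseteq> S"
    unfolding path_image_linepath closed_segment_def using assms by auto
qed auto

lemma below_dist:
  fixes U :: "'a::euclidean_space set"
  assumes ch: "chart r L U p \<nu> \<Phi>" and L: "L \<ge> 0" and x: "x \<in> ball p r"
    and h: "(x - p) \<bullet> \<nu> + h \<le> \<Phi> x" and u: "u \<in> U"
  shows "min (h / (1 + L)) (r - dist p x) \<le> dist x u"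
proof (cases "u \<in> ball p r")
  case False
  then have "r \<le> dist p u" by simp
  moreover have "dist p u \<le> dist p x + dist x u" by (rule dist_triangle)
  ultimately show ?thesis by linarith
next
  case True
  from ch have nu: "norm \<nu> = 1" and mem: "\<forall>x\<in>ball p r. x \<in> U \<longleftrightarrow> (x - p) \<bullet> \<nu> > \<Phi> x"
    and lip: "\<forall>x\<in>ball p r. \<forall>y\<in>ball p r. \<bar>\<Phi> x - \<Phi> y\<bar> \<le> L * dist x y"
    unfolding chart_def by auto
  have 1: "(u - p) \<bullet> \<nu> > \<Phi> u" using mem True u by blast
  have 2: "\<bar>\<Phi> u - \<Phi> x\<bar> \<le> L * dist x u" using lip True x by (metis dist_commute)
  have 3: "(u - x) \<bullet> \<nu> \<le> dist x u"
    using Cauchy_Schwarz_ineq2[of "u - x" \<nu>] nu by (simp add: dist_norm norm_minus_commute)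
  have 4: "(u - x) \<bullet> \<nu> = (u - p) \<bullet> \<nu> - (x - p) \<bullet> \<nu>" by (simp add: inner_diff_left)
  have "h < dist x u + L * dist x u" using 1 2 3 4 h by (smt (verit))
  then have "h < (1 + L) * dist x u" by (simp add: algebra_simps)
  then have "h / (1 + L) \<le> dist x u" using L by (simp add: divide_le_eq mult.commute)
  then show ?thesis by linarith
qed

lemma infdist_below:
  fixes U :: "'a::euclidean_space set"
  assumes ch: "chart r L U p \<nu> \<Phi>" and L: "L \<ge> 0" and x: "x \<in> ball p r"
    and h: "(x - p) \<bullet> \<nu> + h \<le> \<Phi> x" and ne: "U \<noteq> {}"
  shows "min (h / (1 + L)) (r - dist p x) \<le> infdist x U"
  unfolding infdist_notempty[OF ne]
  by (rule cINF_greatest[OF ne]) (rule below_dist[OF ch L x h])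

lemma ball_inside:
  fixes U :: "'a::euclidean_space set"
  assumes ch: "chart r L U p \<nu> \<Phi>" and L: "L \<ge> 0" and T: "0 < T" "T + T / (1 + L) \<le> r"
  shows "ball (p + T *\<^sub>R \<nu>) (T / (1 + L)) \<subseteq> U"
proof
  fix z assume z: "z \<in> ball (p + T *\<^sub>R \<nu>) (T / (1 + L))"
  define c where "c = p + T *\<^sub>R \<nu>"
  from ch have nu: "norm \<nu> = 1" and P0: "\<Phi> p = 0" and mem: "\<forall>x\<in>ball p r. x \<in> U \<longleftrightarrow> (x - p) \<bullet> \<nu> > \<Phi> x"
    and lip: "\<forall>x\<in>ball p r. \<forall>y\<in>ball p r. \<bar>\<Phi> x - \<Phi> y\<bar> \<le> L * dist x y"
    and inv: "\<forall>x t. \<Phi> (x + t *\<^sub>R \<nu>) = \<Phi> x"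
    unfolding chart_def by auto
  have dcz: "dist c z < T / (1 + L)" using z by (simp add: c_def)
  have TL: "T / (1 + L) \<le> T" using T L by (simp add: divide_le_eq)
  have dpc: "dist p c = T" using nu T by (simp add: c_def dist_norm)
  have zb: "z \<in> ball p r"
    using dist_triangle[of p z c] dpc dcz T by (simp add: dist_commute)
  have "T / (1 + L) > 0" using T L by simp
  then have cb: "c \<in> ball p r" using dpc T by simp
  have Pc: "\<Phi> c = 0" using inv P0 by (simp add: c_def)
  have 1: "\<Phi> z \<le> L * dist c z" using lip zb cb Pc by (smt (verit) dist_commute)
  have ee: "\<nu> \<bullet> \<nu> = 1" using nu by (simp add: norm_eq_1)
  have 2: "(z - p) \<bullet> \<nu> = T + (z - c) \<bullet> \<nu>" by (simp add: c_def inner_diff_left inner_add_left ee)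
  have 3: "- dist c z \<le> (z - c) \<bullet> \<nu>"
    using Cauchy_Schwarz_ineq2[of "z - c" \<nu>] nu by (simp add: dist_norm norm_minus_commute abs_le_iff)
  have "(1 + L) * dist c z < T" using dcz L by (simp add: less_divide_eq mult.commute)
  then have "(z - p) \<bullet> \<nu> > \<Phi> z" using 1 2 3 by (simp add: algebra_simps)
  then show "z \<in> U" using mem zb by blast
qed

lemma h_ge_infdist:
  fixes U :: "'a::euclidean_space set"
  assumes ch: "chart r L U p \<nu> \<Phi>" and L: "L \<ge> 0" and xU: "x \<notin> U"
    and d: "(L + 2) * dist p x < r"
  shows "infdist x U \<le> \<Phi> x - (x - p) \<bullet> \<nu>"
proof -
  from ch have nu: "norm \<nu> = 1" and P0: "\<Phi> p = 0" and mem: "\<forall>x\<in>ball p r. x \<in> U \<longleftrightarrow> (x - p) \<bullet> \<nu> > \<Phi> x"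
    and lip: "\<forall>x\<in>ball p r. \<forall>y\<in>ball p r. \<bar>\<Phi> x - \<Phi> y\<bar> \<le> L * dist x y"
    and inv: "\<forall>x t. \<Phi> (x + t *\<^sub>R \<nu>) = \<Phi> x"
    unfolding chart_def by auto
  have ee: "\<nu> \<bullet> \<nu> = 1" using nu by (simp add: norm_eq_1)
  define h where "h = \<Phi> x - (x - p) \<bullet> \<nu>"
  have dx0: "0 \<le> dist p x" by simp
  have xb: "x \<in> ball p r" using d L dx0
    by (smt (verit, best) mem_ball mult_le_cancel_right1)
  have h0: "h \<ge> 0" using mem xb xU by (auto simp: h_def)
  have r0: "r > 0" using d L by (smt (verit) mult_nonneg_nonneg zero_le_dist)
  then have pb: "p \<in> ball p r" by simp
  have "\<bar>\<Phi> x - \<Phi> p\<bar> \<le> L * dist x p" using lip xb pb by blast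
  moreover have "\<bar>(x - p) \<bullet> \<nu>\<bar> \<le> dist p x"
    using Cauchy_Schwarz_ineq2[of "x - p" \<nu>] nu by (simp add: dist_norm norm_minus_commute)
  ultimately have hb: "dist p x + h \<le> (L + 2) * dist p x"
    using P0 by (simp add: h_def dist_commute algebra_simps abs_le_iff)
  show ?thesis unfolding h_def[symmetric]
  proof (rule field_le_epsilon)
    fix \<tau> :: real assume \<tau>: "\<tau> > 0"
    define s where "s = min \<tau> ((r - (L + 2) * dist p x) / 2)"
    have s0: "s > 0" using \<tau> d by (simp add: s_def)
    have "s \<le> \<tau>" by (simp add: s_def)
    define y where "y = x + (h + s) *\<^sub>R \<nu>"
    have "dist p y \<le> dist p x + dist x y" by (rule dist_triangle)
    also have "dist x y = h + s" using nu h0 s0 by (simp add: y_def dist_norm)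
    finally have "dist p y \<le> dist p x + (h + s)" .
    moreover have "s \<le> (r - (L + 2) * dist p x) / 2" unfolding s_def by (rule min.cobounded2)
    ultimately have "dist p y < r" using hb d by simp
    then have yb: "y \<in> ball p r" by simp
    have "(y - p) \<bullet> \<nu> = (x - p) \<bullet> \<nu> + h + s" by (simp add: y_def inner_diff_left inner_add_left ee)
    moreover have "\<Phi> y = \<Phi> x" using inv by (simp add: y_def)
    ultimately have "y \<in> U" using mem yb s0 by (simp add: h_def)
    then have "infdist x U \<le> dist x y" by (rule infdist_le)
    also have "\<dots> = h + s" using nu h0 s0 by (simp add: y_def dist_norm)
    finally show "infdist x U \<le> h + \<tau>" using \<open>s \<le> \<tau>\<close> by linarith
  qed
qed

lemma link:
  fixes D :: "'a::euclidean_space set"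
  assumes ch: "chart r L D p \<nu> \<Phi>" and L: "L \<ge> 0" and e: "\<epsilon> > 0" and K: "K \<ge> 0"
    and a: "dist p a \<le> K * \<epsilon>" "\<epsilon> \<le> \<Phi> a - (a - p) \<bullet> \<nu>"
    and b: "dist p b \<le> K * \<epsilon>" "\<epsilon> \<le> \<Phi> b - (b - p) \<bullet> \<nu>"
    and small: "(3 * K + L * K + 1) * \<epsilon> < r"
  shows "path_component {z. dist p z \<le> (3 * K + L * K + 1) * \<epsilon> \<and> \<epsilon> \<le> \<Phi> z - (z - p) \<bullet> \<nu>} a b"
proof -
  define T where "T = {z. dist p z \<le> (3 * K + L * K + 1) * \<epsilon> \<and> \<epsilon> \<le> \<Phi> z - (z - p) \<bullet> \<nu>}"
  define m where "m = (L * K + K + 1) * \<epsilon>"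
  from ch have nu: "norm \<nu> = 1" and P0: "\<Phi> p = 0"
    and lip: "\<forall>x\<in>ball p r. \<forall>y\<in>ball p r. \<bar>\<Phi> x - \<Phi> y\<bar> \<le> L * dist x y"
    and inv: "\<forall>x t. \<Phi> (x + t *\<^sub>R \<nu>) = \<Phi> x"
    unfolding chart_def by auto
  have ee: "\<nu> \<bullet> \<nu> = 1" using nu by (simp add: norm_eq_1)
  have LK: "L * K * \<epsilon> \<ge> 0" using L K e by simp
  have Ke: "K * \<epsilon> \<ge> 0" using K e by simp
  have ip: "\<bar>(x - p) \<bullet> \<nu>\<bar> \<le> dist p x" for x
    using Cauchy_Schwarz_ineq2[of "x - p" \<nu>] nu by (simp add: dist_norm norm_minus_commute)
  have vert: "path_component T x (x - ((x - p) \<bullet> \<nu> + m) *\<^sub>R \<nu>)"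
    if x: "dist p x \<le> K * \<epsilon>" "\<epsilon> \<le> \<Phi> x - (x - p) \<bullet> \<nu>" for x
  proof (rule seg_pc)
    fix u :: real assume u: "0 \<le> u" "u \<le> 1"
    define t where "t = (x - p) \<bullet> \<nu> + m"
    have t0: "0 \<le> t" using ip[of x] x LK e by (simp add: t_def m_def algebra_simps abs_le_iff)
    have t1: "t \<le> K * \<epsilon> + m" using ip[of x] x by (simp add: t_def abs_le_iff)
    have ut: "0 \<le> u * t" "u * t \<le> t" using u t0 by (auto simp: mult_left_le_one_le)
    have z: "(1 - u) *\<^sub>R x + u *\<^sub>R (x - t *\<^sub>R \<nu>) = x + (- (u * t)) *\<^sub>R \<nu>"
      by (simp add: algebra_simps)
    have "dist p (x + (- (u * t)) *\<^sub>R \<nu>) \<le> dist p x + dist x (x + (- (u * t)) *\<^sub>R \<nu>)"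
      by (rule dist_triangle)
    also have "dist x (x + (- (u * t)) *\<^sub>R \<nu>) = u * t" using nu ut by (simp add: dist_norm)
    finally have d1: "dist p (x + (- (u * t)) *\<^sub>R \<nu>) \<le> (3 * K + L * K + 1) * \<epsilon>"
      using x t1 ut by (simp add: m_def algebra_simps)
    have "\<Phi> (x + (- (u * t)) *\<^sub>R \<nu>) = \<Phi> x" using inv by blast
    moreover have "(x + (- (u * t)) *\<^sub>R \<nu> - p) \<bullet> \<nu> = (x - p) \<bullet> \<nu> - u * t"
      by (simp add: inner_diff_left inner_add_left ee)
    ultimately have "\<epsilon> \<le> \<Phi> (x + (- (u * t)) *\<^sub>R \<nu>) - (x + (- (u * t)) *\<^sub>R \<nu> - p) \<bullet> \<nu>"
      using x ut by simp
    then show "(1 - u) *\<^sub>R x + u *\<^sub>R (x - ((x - p) \<bullet> \<nu> + m) *\<^sub>R \<nu>) \<in> T"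
      using d1 z unfolding T_def t_def by simp
  qed
  define al where "al = a - ((a - p) \<bullet> \<nu> + m) *\<^sub>R \<nu>"
  define bl where "bl = b - ((b - p) \<bullet> \<nu> + m) *\<^sub>R \<nu>"
  have hor: "path_component T al bl"
  proof (rule seg_pc)
    fix u :: real assume u: "0 \<le> u" "u \<le> 1"
    define z where "z = (1 - u) *\<^sub>R al + u *\<^sub>R bl"
    define ah where "ah = a - ((a - p) \<bullet> \<nu>) *\<^sub>R \<nu>"
    define bh where "bh = b - ((b - p) \<bullet> \<nu>) *\<^sub>R \<nu>"
    have zm: "z + m *\<^sub>R \<nu> - p = (1 - u) *\<^sub>R (ah - p) + u *\<^sub>R (bh - p)"
      by (simp add: z_def al_def bl_def ah_def bh_def algebra_simps)
    have nah: "norm (ah - p) \<le> K * \<epsilon>"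
    proof -
      have eq: "ah - p = (a - p) - ((a - p) \<bullet> \<nu>) *\<^sub>R \<nu>" by (simp add: ah_def)
      have "norm (ah - p) \<le> norm (a - p)" unfolding eq by (rule proj_norm_le[OF nu])
      then show ?thesis using a by (simp add: dist_norm norm_minus_commute)
    qed
    have nbh: "norm (bh - p) \<le> K * \<epsilon>"
    proof -
      have eq: "bh - p = (b - p) - ((b - p) \<bullet> \<nu>) *\<^sub>R \<nu>" by (simp add: bh_def)
      have "norm (bh - p) \<le> norm (b - p)" unfolding eq by (rule proj_norm_le[OF nu])
      then show ?thesis using b by (simp add: dist_norm norm_minus_commute)
    qed
    have "norm (z + m *\<^sub>R \<nu> - p) \<le> norm ((1 - u) *\<^sub>R (ah - p)) + norm (u *\<^sub>R (bh - p))"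
      unfolding zm by (rule norm_triangle_ineq)
    also have "\<dots> = (1 - u) * norm (ah - p) + u * norm (bh - p)" using u by simp
    also have "\<dots> \<le> (1 - u) * (K * \<epsilon>) + u * (K * \<epsilon>)"
      using u nah nbh by (intro add_mono mult_left_mono) auto
    also have "\<dots> = K * \<epsilon>" by (simp add: algebra_simps)
    finally have nz: "dist p (z + m *\<^sub>R \<nu>) \<le> K * \<epsilon>" by (simp add: dist_norm norm_minus_commute)
    have r1: "K * \<epsilon> < r" using small LK Ke e by (simp add: algebra_simps)
    have zb: "z + m *\<^sub>R \<nu> \<in> ball p r" using nz r1 by simp
    have pb: "p \<in> ball p r" using r1 Ke by simp
    have "\<bar>\<Phi> (z + m *\<^sub>R \<nu>) - \<Phi> p\<bar> \<le> L * dist (z + m *\<^sub>R \<nu>) p" using lip zb pb by blast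
    also have "\<dots> \<le> L * (K * \<epsilon>)" using nz L by (simp add: dist_commute mult_left_mono)
    finally have Phz: "\<Phi> z \<ge> - (L * K * \<epsilon>)" using inv P0 by (simp add: abs_le_iff algebra_simps)
    have zp: "(z - p) \<bullet> \<nu> = - m"
    proof -
      have zeq: "z - p = (1 - u) *\<^sub>R (al - p) + u *\<^sub>R (bl - p)" by (simp add: z_def algebra_simps)
      have 2: "(al - p) \<bullet> \<nu> = - m" by (simp add: al_def inner_diff_left ee)
      have 3: "(bl - p) \<bullet> \<nu> = - m" by (simp add: bl_def inner_diff_left ee)
      have "(z - p) \<bullet> \<nu> = (1 - u) * ((al - p) \<bullet> \<nu>) + u * ((bl - p) \<bullet> \<nu>)"
        unfolding zeq by (simp add: inner_add_left)
      then show ?thesis unfolding 2 3 by (simp add: algebra_simps)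
    qed
    have h: "\<epsilon> \<le> \<Phi> z - (z - p) \<bullet> \<nu>" using Phz zp Ke e by (simp add: m_def algebra_simps)
    have "dist p z \<le> dist p (z + m *\<^sub>R \<nu>) + dist (z + m *\<^sub>R \<nu>) z" by (rule dist_triangle)
    also have "dist (z + m *\<^sub>R \<nu>) z = \<bar>m\<bar>" using nu by (simp add: dist_norm)
    finally have "dist p z \<le> (3 * K + L * K + 1) * \<epsilon>" using nz Ke LK e
      by (simp add: m_def algebra_simps)
    then show "(1 - u) *\<^sub>R al + u *\<^sub>R bl \<in> T" using h by (simp add: T_def z_def)
  qed
  have "path_component T a al" unfolding al_def by (rule vert[OF a])
  moreover have "path_component T bl b" unfolding bl_def by (rule path_component_sym, rule vert[OF b])
  ultimately show ?thesis unfolding T_def[symmetric] using hor path_component_trans by metis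
qed

lemma ball_measure_eq:
  fixes c :: "'a::euclidean_space"
  assumes "\<beta> \<ge> 0"
  shows "measure lebesgue (ball c \<beta>) = measure lborel (ball (0::'a) \<beta>)"
proof -
  have "measure lebesgue (ball c \<beta>) = measure lborel (ball c \<beta>)"
    by (rule measure_completion) simp
  also have "\<dots> = \<beta> ^ DIM('a) * measure lborel (ball (0::'a) 1)" by (rule content_ball_conv_unit_ball[OF assms])
  also have "\<dots> = measure lborel (ball (0::'a) \<beta>)" by (rule content_ball_conv_unit_ball[OF assms, symmetric])
  finally show ?thesis .
qed

lemma disjoint_balls_measure:
  fixes \<Omega> :: "'a::euclidean_space set" and c :: "nat \<Rightarrow> 'a"
  assumes "bounded \<Omega>" "open \<Omega>" "\<beta> > 0" and sub: "\<forall>i\<le>N. ball (c i) \<beta> \<subseteq> \<Omega>"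
    and sep: "\<forall>i\<le>N. \<forall>j\<le>N. i \<noteq> j \<longrightarrow> 2 * \<beta> \<le> dist (c i) (c j)"
  shows "real (N + 1) * measure lborel (ball (0::'a) \<beta>) \<le> measure lebesgue \<Omega>"
proof -
  have disj: "disjoint_family_on (\<lambda>i. ball (c i) \<beta>) {..N}"
    unfolding disjoint_family_on_def
  proof (intro ballI impI)
    fix i j assume ij: "i \<in> {..N}" "j \<in> {..N}" "i \<noteq> j"
    show "ball (c i) \<beta> \<inter> ball (c j) \<beta> = {}"
    proof (rule ccontr)
      assume "ball (c i) \<beta> \<inter> ball (c j) \<beta> \<noteq> {}"
      then obtain z where "dist (c i) z < \<beta>" "dist (c j) z < \<beta>" by auto
      then have "dist (c i) (c j) < 2 * \<beta>" using dist_triangle3[of "c i" "c j" z] dist_commute[of z "c i"] dist_commute[of z "c j"] by linarith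
      moreover have "2 * \<beta> \<le> dist (c i) (c j)" using sep ij by simp
      ultimately show False by linarith
    qed
  qed
  have meas: "(\<lambda>i. ball (c i) \<beta>) ` {..N} \<subseteq> sets lebesgue"
    using lmeasurable_ball by (auto simp: fmeasurable_def)
  have fin: "emeasure lebesgue (ball (c i) \<beta>) \<noteq> \<infinity>" for i
    using lmeasurable_ball[of "c i" \<beta>] by (auto simp: fmeasurable_def)
  have "measure lebesgue (\<Union>i\<in>{..N}. ball (c i) \<beta>) = (\<Sum>i\<in>{..N}. measure lebesgue (ball (c i) \<beta>))"
    by (rule measure_finite_Union[OF _ meas disj fin]) simp
  also have "\<dots> = (\<Sum>i\<in>{..N}. measure lborel (ball (0::'a) \<beta>))"
    by (intro sum.cong refl ball_measure_eq) (use assms(3) in simp)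
  also have "\<dots> = real (N + 1) * measure lborel (ball (0::'a) \<beta>)" by simp
  finally have eq: "measure lebesgue (\<Union>i\<in>{..N}. ball (c i) \<beta>) = real (N + 1) * measure lborel (ball (0::'a) \<beta>)" .
  have "measure lebesgue (\<Union>i\<in>{..N}. ball (c i) \<beta>) \<le> measure lebesgue \<Omega>"
  proof (rule measure_mono_fmeasurable)
    show "(\<Union>i\<in>{..N}. ball (c i) \<beta>) \<subseteq> \<Omega>" using sub by auto
    show "(\<Union>i\<in>{..N}. ball (c i) \<beta>) \<in> sets lebesgue" using meas by blast
    show "\<Omega> \<in> fmeasurable lebesgue" using lmeasurable_open assms(1,2) by blast
  qed
  then show ?thesis using eq by simp
qed

lemma inner_ball:
  fixes \<Omega> :: "'a::euclidean_space set"
  assumes C: "C1alpha_boundary \<alpha> r L \<Omega>" and dim: "DIM('a) \<ge> 2" and r: "r > 0" and L: "L \<ge> 0"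
    and x: "x \<in> \<Omega>"
  shows "\<exists>c. dist x c \<le> r \<and> ball c (r / (2 * (1 + L))) \<subseteq> \<Omega>"
proof (cases "ball x (r / (2 * (1 + L))) \<subseteq> \<Omega>")
  case True
  then show ?thesis using r by (intro exI[of _ x]) simp
next
  case False
  define \<beta> where "\<beta> = r / (2 * (1 + L))"
  have \<beta>: "\<beta> \<le> r / 2" using r L by (simp add: \<beta>_def field_simps)
  have \<beta>eq: "(r/2) / (1 + L) = \<beta>" by (simp add: \<beta>_def)
  from False have "\<exists>y. y \<in> ball x \<beta> \<and> y \<notin> \<Omega>" unfolding \<beta>_def by blast
  then obtain y where y: "y \<in> ball x \<beta>" "y \<notin> \<Omega>" by blast
  have "closed_segment x y \<inter> frontier \<Omega> \<noteq> {}"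
    by (rule connected_Int_frontier) (use x y in auto)
  then obtain q where q: "q \<in> closed_segment x y" "q \<in> frontier \<Omega>" by blast
  have dxq: "dist x q < \<beta>"
    using dist_in_closed_segment[OF q(1)] y by (simp add: dist_commute)
  obtain \<nu> \<Phi> where ch: "chart r L \<Omega> q \<nu> \<Phi>" using chart_exists[OF C q(2) dim r] by blast
  have nu: "norm \<nu> = 1" using ch by (simp add: chart_def)
  have "ball (q + (r/2) *\<^sub>R \<nu>) ((r/2) / (1 + L)) \<subseteq> \<Omega>"
    by (rule ball_inside[OF ch L]) (use r \<beta> \<beta>eq in auto)
  moreover have "dist x (q + (r/2) *\<^sub>R \<nu>) \<le> r"
  proof -
    have "dist x (q + (r/2) *\<^sub>R \<nu>) \<le> dist x q + dist q (q + (r/2) *\<^sub>R \<nu>)" by (rule dist_triangle)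
    also have "dist q (q + (r/2) *\<^sub>R \<nu>) = r/2" using nu r by (simp add: dist_norm)
    finally show ?thesis using dxq \<beta> by simp
  qed
  ultimately show ?thesis using \<beta>eq unfolding \<beta>_def by (intro exI[of _ "q + (r/2) *\<^sub>R \<nu>"]) simp
qed

lemma diam_bound:
  assumes dim: "DIM('a::euclidean_space) \<ge> 2" and r: "r > 0" and L: "L \<ge> 0"
  shows "\<exists>Dm\<ge>0. \<forall>\<Omega>::'a set. open \<Omega> \<and> connected \<Omega> \<and> bounded \<Omega> \<and>
            measure lebesgue \<Omega> \<le> M * r ^ DIM('a) \<and> C1alpha_boundary \<alpha> r L \<Omega> \<longrightarrow>
            (\<forall>x\<in>\<Omega>. \<forall>y\<in>\<Omega>. dist x y \<le> Dm)"
proof -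
  define \<beta> where "\<beta> = r / (2 * (1 + L))"
  have \<beta>0: "\<beta> > 0" using r L by (simp add: \<beta>_def)
  define s where "s = 2 * r + 2 * \<beta>"
  have s0: "s > 0" using r \<beta>0 by (simp add: s_def)
  define V where "V = measure lborel (ball (0::'a) \<beta>)"
  have V0: "V > 0" using \<beta>0 by (simp add: V_def content_ball_pos)
  define N where "N = nat \<lceil>M * r ^ DIM('a) / V\<rceil>"
  have NV: "M * r ^ DIM('a) < real (N + 1) * V"
  proof -
    have "M * r ^ DIM('a) / V \<le> real N" by (simp add: N_def) linarith
    then have "M * r ^ DIM('a) \<le> real N * V" using V0 by (simp add: divide_le_eq)
    then show ?thesis using V0 by (simp add: algebra_simps)
  qed
  show ?thesis
  proof (intro exI[of _ "2 * real N * s"] conjI allI impI ballI)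
    show "0 \<le> 2 * real N * s" using s0 by simp
    fix \<Omega> :: "'a set" and x y
    assume H: "open \<Omega> \<and> connected \<Omega> \<and> bounded \<Omega> \<and> measure lebesgue \<Omega> \<le> M * r ^ DIM('a) \<and> C1alpha_boundary \<alpha> r L \<Omega>"
      and x: "x \<in> \<Omega>" and y: "y \<in> \<Omega>"
    have far: "dist x z < real N * s" if z: "z \<in> \<Omega>" for z
    proof (rule ccontr)
      assume "\<not> dist x z < real N * s"
      then have zN: "real N * s \<le> dist x z" by simp
      have conn: "connected ((\<lambda>w. dist x w) ` \<Omega>)"
        using H by (intro connected_continuous_image) (auto intro!: continuous_intros)
      have a0: "0 \<in> (\<lambda>w. dist x w) ` \<Omega>" by (rule image_eqI[where x=x]) (simp_all add: x)
      have a1: "dist x z \<in> (\<lambda>w. dist x w) ` \<Omega>" using z by simp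
      have itv: "\<forall>a\<in>(\<lambda>w. dist x w) ` \<Omega>. \<forall>b\<in>(\<lambda>w. dist x w) ` \<Omega>. \<forall>c. a \<le> c \<longrightarrow> c \<le> b \<longrightarrow> c \<in> (\<lambda>w. dist x w) ` \<Omega>"
        using conn connected_iff_interval by blast
      have "\<forall>i. \<exists>w. i \<le> N \<longrightarrow> w \<in> \<Omega> \<and> dist x w = real i * s"
      proof (intro allI)
        fix i
        show "\<exists>w. i \<le> N \<longrightarrow> w \<in> \<Omega> \<and> dist x w = real i * s"
        proof (cases "i \<le> N")
          case True
          have "real i * s \<le> real N * s" using True s0 by (simp add: mult_right_mono)
          then have le: "real i * s \<le> dist x z" using zN by linarith
          have ge: "0 \<le> real i * s" using s0 by simp
          have "real i * s \<in> (\<lambda>w. dist x w) ` \<Omega>"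
            using itv a0 a1 le ge by blast
          then show ?thesis by auto
        qed auto
      qed
      then obtain X where X0: "\<forall>i. i \<le> N \<longrightarrow> X i \<in> \<Omega> \<and> dist x (X i) = real i * s"
        using choice[of "\<lambda>i w. i \<le> N \<longrightarrow> w \<in> \<Omega> \<and> dist x w = real i * s"] by blast
      then have X: "\<And>i. i \<le> N \<Longrightarrow> X i \<in> \<Omega> \<and> dist x (X i) = real i * s" by blast
      have "\<forall>i. \<exists>c. i \<le> N \<longrightarrow> dist (X i) c \<le> r \<and> ball c \<beta> \<subseteq> \<Omega>"
      proof (intro allI)
        fix i
        show "\<exists>c. i \<le> N \<longrightarrow> dist (X i) c \<le> r \<and> ball c \<beta> \<subseteq> \<Omega>"
        proof (cases "i \<le> N")
          case True
          then have "X i \<in> \<Omega>" using X by blast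
          then obtain c where "dist (X i) c \<le> r \<and> ball c \<beta> \<subseteq> \<Omega>"
            using inner_ball[of \<alpha> r L \<Omega> "X i"] H dim r L unfolding \<beta>_def by blast
          then show ?thesis by blast
        qed auto
      qed
      then obtain c where c0: "\<forall>i. i \<le> N \<longrightarrow> dist (X i) (c i) \<le> r \<and> ball (c i) \<beta> \<subseteq> \<Omega>"
        using choice[of "\<lambda>i c. i \<le> N \<longrightarrow> dist (X i) c \<le> r \<and> ball c \<beta> \<subseteq> \<Omega>"] by blast
      then have c: "\<And>i. i \<le> N \<Longrightarrow> dist (X i) (c i) \<le> r \<and> ball (c i) \<beta> \<subseteq> \<Omega>" by blast
      have sep: "2 * \<beta> \<le> dist (c i) (c j)" if ij: "i \<le> N" "j \<le> N" "i < j" for i j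
      proof -
        have "real j \<ge> real i + 1" using ij by linarith
        then have "(real j - real i) * s \<ge> 1 * s" using s0 by (intro mult_right_mono) auto
        then have "real j * s - real i * s \<ge> s" by (simp add: algebra_simps)
        moreover have "dist x (X j) \<le> dist x (X i) + dist (X i) (c i) + dist (c i) (c j) + dist (c j) (X j)"
          using dist_triangle[of x "X j" "X i"] dist_triangle[of "X i" "X j" "c i"] dist_triangle[of "c i" "X j" "c j"] by linarith
        ultimately show ?thesis using X[OF ij(1)] X[OF ij(2)] c[OF ij(1)] c[OF ij(2)]
          by (simp add: dist_commute s_def)
      qed
      have "real (N + 1) * measure lborel (ball (0::'a) \<beta>) \<le> measure lebesgue \<Omega>"
      proof (rule disjoint_balls_measure[of \<Omega> \<beta> N c])
        show "\<forall>i\<le>N. \<forall>j\<le>N. i \<noteq> j \<longrightarrow> 2 * \<beta> \<le> dist (c i) (c j)"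
        proof (intro allI impI)
          fix i j assume "i \<le> N" "j \<le> N" "i \<noteq> j"
          then consider "i < j" | "j < i" by linarith
          then show "2 * \<beta> \<le> dist (c i) (c j)"
          proof cases
            case 1
            then show ?thesis using sep \<open>i \<le> N\<close> \<open>j \<le> N\<close> by blast
          next
            case 2
            then have "2 * \<beta> \<le> dist (c j) (c i)" using sep \<open>i \<le> N\<close> \<open>j \<le> N\<close> by blast
            then show ?thesis by (simp add: dist_commute)
          qed
        qed
      qed (use H \<beta>0 c in auto)
      then show False using H NV unfolding V_def by linarith
    qed
    have "dist x y \<le> dist x x + dist x y" by simp
    have "real N * s \<le> 2 * real N * s" using s0 by simp
    then show "dist x y \<le> 2 * real N * s" using far[OF y] by linarith
  qed
qed

lemma near_closure_in:
  fixes \<Omega> D :: "'a::euclidean_space set"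
  assumes sub: "closure D \<subseteq> \<Omega>" and sep: "\<forall>x\<in>D. \<forall>y\<in>frontier \<Omega>. dist x y \<ge> \<delta>"
    and p: "p \<in> closure D" and z: "dist p z < \<delta>"
  shows "z \<in> \<Omega>"
proof (rule ccontr)
  assume zn: "z \<notin> \<Omega>"
  obtain x where x: "x \<in> D" "dist x p < \<delta> - dist p z"
    using p z closure_approachable[of p D] by (metis diff_gt_0_iff_gt)
  have dxz: "dist x z < \<delta>" using x dist_triangle[of x z p] by linarith
  have xO: "x \<in> \<Omega>" using x sub closure_subset by blast
  have "closed_segment x z \<inter> frontier \<Omega> \<noteq> {}"
    by (rule connected_Int_frontier) (use xO zn in auto)
  then obtain q where q: "q \<in> closed_segment x z" "q \<in> frontier \<Omega>" by blast
  have "dist x q \<le> dist x z" using dist_in_closed_segment[OF q(1)] by (simp add: dist_commute)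
  then show False using sep x q dxz by force
qed

lemma infdist_ge:
  assumes "A \<noteq> {}" "\<forall>a\<in>A. m \<le> dist x a"
  shows "m \<le> infdist x A"
  unfolding infdist_notempty[OF assms(1)] by (rule cINF_greatest) (use assms in auto)

lemma main_fixed:
  fixes \<Omega> D :: "'a::euclidean_space set"
  assumes dim: "DIM('a) \<ge> 2" and r: "r > 0" and \<delta>: "\<delta> > 0" and L: "L \<ge> 0"
    and Dm: "Dm \<ge> 0" and diam: "\<forall>x\<in>\<Omega>. \<forall>y\<in>\<Omega>. dist x y \<le> Dm"
    and oO: "open \<Omega>" and bO: "bounded \<Omega>" and oD: "open D" and sub: "closure D \<subseteq> \<Omega>"
    and conn: "connected (\<Omega> - closure D)"
    and sep: "\<forall>x\<in>D. \<forall>y\<in>frontier \<Omega>. dist x y \<ge> \<delta>"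
    and CD: "C1alpha_boundary \<alpha> r L D"
    and P: "P \<in> frontier D"
  defines "\<Lambda> \<equiv> 1 + L"
  defines "K \<equiv> 2 * \<Lambda> + 3"
  defines "\<rho> \<equiv> 3 * K + L * K + 1"
  defines "\<epsilon> \<equiv> min r \<delta> / (4 * \<rho>)"
  defines "\<epsilon>' \<equiv> \<epsilon> / (2 * \<Lambda>)"
  defines "c \<equiv> \<Lambda> + Dm / \<epsilon>' + (Dm + \<delta>) / (\<delta> / 2)"
  shows "\<exists>\<gamma>. path \<gamma> \<and> pathstart \<gamma> = P \<and> pathfinish \<gamma> \<in> frontier \<Omega> \<and>
            (\<forall>t\<in>{0<..<1}. \<gamma> t \<in> \<Omega> - closure D) \<and>
            (\<forall>z\<in>path_image \<gamma>. dist z P \<le> c * infdist z D)"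
proof -
  have \<Lambda>1: "\<Lambda> \<ge> 1" using L by (simp add: \<Lambda>_def)
  have K5: "K \<ge> 5" using \<Lambda>1 by (simp add: K_def)
  have LK0: "L * K \<ge> 0" using L K5 by simp
  have \<rho>pos: "\<rho> > 0" using K5 LK0 by (simp add: \<rho>_def)
  have mrd: "min r \<delta> > 0" using r \<delta> by simp
  have e0: "\<epsilon> > 0" using mrd \<rho>pos by (simp add: \<epsilon>_def)
  have \<rho>\<epsilon>: "\<rho> * \<epsilon> = min r \<delta> / 4" using \<rho>pos by (simp add: \<epsilon>_def)
  have \<rho>r: "\<rho> * \<epsilon> \<le> r / 4" and \<rho>d: "\<rho> * \<epsilon> \<le> \<delta> / 4" using \<rho>\<epsilon> by auto
  have e'0: "\<epsilon>' > 0" using e0 \<Lambda>1 by (simp add: \<epsilon>'_def)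
  have e'le: "\<epsilon>' \<le> \<epsilon> / 2" using e0 \<Lambda>1 by (simp add: \<epsilon>'_def divide_simps)
  have e'le2: "\<epsilon>' \<le> \<epsilon> / \<Lambda>" using e0 \<Lambda>1 by (simp add: \<epsilon>'_def divide_simps)
  have Ke: "K * \<epsilon> \<le> \<rho> * \<epsilon>" using LK0 K5 e0 by (intro mult_right_mono) (auto simp: \<rho>_def)
  have K2e: "(K + 2) * \<epsilon> \<le> \<rho> * \<epsilon>" using LK0 K5 e0 by (intro mult_right_mono) (auto simp: \<rho>_def)
  have LK2: "(L + 2) * K * \<epsilon> \<le> \<rho> * \<epsilon>" using LK0 K5 e0 by (intro mult_right_mono) (auto simp: \<rho>_def algebra_simps)
  have \<Lambda>e: "\<Lambda> * \<epsilon> \<le> K * \<epsilon>" using e0 by (intro mult_right_mono) (auto simp: K_def \<Lambda>_def L)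
  have Ke_r: "K * \<epsilon> < r" using Ke \<rho>r r by linarith
  have eK: "\<epsilon> \<le> K * \<epsilon>" using K5 e0 by simp
  have e\<rho>: "\<epsilon> \<le> \<rho> * \<epsilon>" using eK Ke by linarith
  have e_r: "\<epsilon> < r" using eK Ke_r by linarith
  have e_d: "\<epsilon> \<le> \<delta> / 2" using e\<rho> \<rho>d \<delta> by linarith
  have e\<Lambda>: "\<epsilon> / \<Lambda> \<le> \<epsilon>" using e0 \<Lambda>1 by (simp add: divide_le_eq)
  have Dne: "D \<noteq> {}" using P by auto
  have PcD: "P \<in> closure D" using P by (simp add: frontier_def)
  have PO: "P \<in> \<Omega>" using PcD sub by blast
  have DO: "D \<subseteq> \<Omega>" using sub closure_subset by blast
  have nearO: "z \<in> \<Omega>" if "p \<in> closure D" "dist p z < \<delta>" for p z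
    by (rule near_closure_in[OF sub sep that])
  have notcl: "z \<notin> closure D" if "infdist z D > 0" for z
    using that in_closure_iff_infdist_zero[OF Dne] by simp
  have "\<forall>p\<in>frontier D. \<exists>\<nu>. \<exists>\<Phi>. chart r L D p \<nu> \<Phi>" using chart_exists[OF CD _ dim r] by blast
  from bchoice[OF this] obtain nu where "\<forall>p\<in>frontier D. \<exists>\<Phi>. chart r L D p (nu p) \<Phi>" by blast
  from bchoice[OF this] obtain Phi where ch: "\<forall>p\<in>frontier D. chart r L D p (nu p) (Phi p)" by blast
  define E where "E = {z \<in> \<Omega>. \<epsilon>' \<le> infdist z D}"
  define s where "s = 2 * \<Lambda> * \<epsilon>"
  have s_ge: "s \<ge> \<epsilon>" using \<Lambda>1 e0 by (simp add: s_def)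
  have sK: "\<epsilon> + \<epsilon> / 2 + s \<le> K * \<epsilon>" using e0 by (simp add: s_def K_def algebra_simps)
  have chp: "chart r L D p (nu p) (Phi p)" if "p \<in> frontier D" for p using ch that by blast
  have linkP: "path_component E a b"
    if p: "p \<in> frontier D" and a: "dist p a \<le> K * \<epsilon>" "\<epsilon> \<le> Phi p a - (a - p) \<bullet> nu p"
      and b: "dist p b \<le> K * \<epsilon>" "\<epsilon> \<le> Phi p b - (b - p) \<bullet> nu p" for p a b
  proof -
    have "path_component {z. dist p z \<le> (3 * K + L * K + 1) * \<epsilon> \<and> \<epsilon> \<le> Phi p z - (z - p) \<bullet> nu p} a b"
      by (rule link[OF chp[OF p] L e0 _ a b]) (use K5 \<rho>r r in \<open>auto simp: \<rho>_def\<close>)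
    moreover have "{z. dist p z \<le> (3 * K + L * K + 1) * \<epsilon> \<and> \<epsilon> \<le> Phi p z - (z - p) \<bullet> nu p} \<subseteq> E"
    proof
      fix z assume z: "z \<in> {z. dist p z \<le> (3 * K + L * K + 1) * \<epsilon> \<and> \<epsilon> \<le> Phi p z - (z - p) \<bullet> nu p}"
      then have dz: "dist p z \<le> \<rho> * \<epsilon>" and hz: "(z - p) \<bullet> nu p + \<epsilon> \<le> Phi p z" by (auto simp: \<rho>_def)
      have zb: "z \<in> ball p r" using dz \<rho>r r by simp
      have "min (\<epsilon> / (1 + L)) (r - dist p z) \<le> infdist z D"
        by (rule infdist_below[OF chp[OF p] L zb hz Dne])
      moreover have "\<epsilon> / (1 + L) \<le> r - dist p z"
        using dz \<rho>r e\<rho> e\<Lambda> r unfolding \<Lambda>_def by linarith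
      ultimately have "\<epsilon> / \<Lambda> \<le> infdist z D" by (simp add: \<Lambda>_def)
      moreover have "z \<in> \<Omega>" using nearO[of p z] p dz \<rho>d \<delta> by (simp add: frontier_def)
      ultimately show "z \<in> E" using e'le2 by (simp add: E_def)
    qed
    ultimately show ?thesis using path_component_of_subset by blast
  qed
  have push: "dist p (w - s *\<^sub>R nu p) \<le> \<epsilon> + s \<and> s \<le> Phi p (w - s *\<^sub>R nu p) - (w - s *\<^sub>R nu p - p) \<bullet> nu p
      \<and> 2 * \<epsilon> \<le> infdist (w - s *\<^sub>R nu p) D"
    if p: "p \<in> frontier D" and w: "w \<notin> D" and dw: "dist w p < \<epsilon>" for p w
  proof -
    note chw = chp[OF p]
    from chw have nu: "norm (nu p) = 1" and mem: "\<forall>x\<in>ball p r. x \<in> D \<longleftrightarrow> (x - p) \<bullet> nu p > Phi p x"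
      and inv: "\<forall>x t. Phi p (x + t *\<^sub>R nu p) = Phi p x"
      unfolding chart_def by auto
    have ee: "nu p \<bullet> nu p = 1" using nu by (simp add: norm_eq_1)
    have wb: "w \<in> ball p r" using dw e_r by (simp add: dist_commute)
    have hw: "(w - p) \<bullet> nu p \<le> Phi p w" using mem wb w by force
    define a where "a = w - s *\<^sub>R nu p"
    have Pa: "Phi p a = Phi p w" using inv[rule_format, of w "- s"] by (simp add: a_def)
    have ia: "(a - p) \<bullet> nu p = (w - p) \<bullet> nu p - s" by (simp add: a_def inner_diff_left ee)
    have "dist p a \<le> dist p w + dist w a" by (rule dist_triangle)
    also have "dist w a = s" using nu e0 \<Lambda>1 by (simp add: a_def dist_norm s_def)
    finally have da: "dist p a \<le> \<epsilon> + s" using dw by (simp add: dist_commute)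
    have daK: "dist p a \<le> K * \<epsilon>" using da sK e0 by linarith
    have ab: "a \<in> ball p r" using daK Ke_r by simp
    have ha: "(a - p) \<bullet> nu p + s \<le> Phi p a" using Pa ia hw by simp
    have "min (s / (1 + L)) (r - dist p a) \<le> infdist a D"
      by (rule infdist_below[OF chw L ab ha Dne])
    moreover have "s / (1 + L) = 2 * \<epsilon>" using L by (simp add: s_def \<Lambda>_def field_simps)
    moreover have "2 * \<epsilon> \<le> r - dist p a" using daK K2e \<rho>r r by (simp add: algebra_simps)
    ultimately have "2 * \<epsilon> \<le> infdist a D" by simp
    then show ?thesis using da ha Pa ia unfolding a_def by simp
  qed
  define S where "S = \<Omega> - closure D"
  have oS: "open S" unfolding S_def using oO by (intro open_Diff) auto
  define Rep where "Rep w a \<longleftrightarrow> (\<epsilon> \<le> infdist w D \<and> a = w) \<or>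
      (infdist w D < \<epsilon> \<and> (\<exists>p\<in>frontier D. dist w p < \<epsilon> \<and> a = w - s *\<^sub>R nu p))" for w a
  have notD: "w \<notin> D" if "w \<in> S" for w using that closure_subset by (auto simp: S_def)
  have rep_ex: "\<exists>a. Rep w a" if w: "w \<in> S" for w
  proof (cases "\<epsilon> \<le> infdist w D")
    case True
    then show ?thesis by (auto simp: Rep_def)
  next
    case False
    have "\<exists>x\<in>D. dist w x < \<epsilon>"
    proof (rule ccontr)
      assume "\<not> (\<exists>x\<in>D. dist w x < \<epsilon>)"
      then have "\<epsilon> \<le> infdist w D" by (intro infdist_ge[OF Dne]) (auto simp: not_less)
      then show False using False by simp
    qed
    then obtain x where x: "x \<in> D" "dist w x < \<epsilon>" by blast
    have "closed_segment w x \<inter> frontier D \<noteq> {}"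
      by (rule connected_Int_frontier) (use x notD[OF w] in auto)
    then obtain q where q: "q \<in> closed_segment w x" "q \<in> frontier D" by blast
    have "dist w q \<le> dist w x" using dist_in_closed_segment[OF q(1)] by (simp add: dist_commute)
    then have "dist w q < \<epsilon>" using x by linarith
    then show ?thesis using q False unfolding Rep_def by (intro exI[of _ "w - s *\<^sub>R nu q"]) auto
  qed
  have pushE: "w - s *\<^sub>R nu p \<in> E \<and> 2 * \<epsilon> \<le> infdist (w - s *\<^sub>R nu p) D \<and> dist p (w - s *\<^sub>R nu p) \<le> K * \<epsilon>"
    if "w \<in> S" "p \<in> frontier D" "dist w p < \<epsilon>" for w p
  proof -
    have pu: "dist p (w - s *\<^sub>R nu p) \<le> \<epsilon> + s" "2 * \<epsilon> \<le> infdist (w - s *\<^sub>R nu p) D"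
      using push[OF that(2) notD[OF that(1)] that(3)] by auto
    have dK: "dist p (w - s *\<^sub>R nu p) \<le> K * \<epsilon>" using pu sK e0 by linarith
    have "w - s *\<^sub>R nu p \<in> \<Omega>"
      using nearO[of p] that(2) dK Ke \<rho>d \<delta> by (simp add: frontier_def)
    then show ?thesis using pu dK e'le e0 by (simp add: E_def)
  qed
  have rep_E: "a \<in> E" if "w \<in> S" "Rep w a" for w a
    using that pushE e'le e0 unfolding Rep_def by (auto simp: E_def S_def)
  have claim: "path_component E (w - s *\<^sub>R nu p) a1"
    if w: "w \<in> S" and p: "p \<in> frontier D" and dwp: "dist w p < \<epsilon>" and w1: "w1 \<in> S"
      and dww: "dist w w1 \<le> \<epsilon> / 2" and R1: "Rep w1 a1" for w p w1 a1
  proof -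
    have pu: "dist p (w - s *\<^sub>R nu p) \<le> \<epsilon> + s" "s \<le> Phi p (w - s *\<^sub>R nu p) - (w - s *\<^sub>R nu p - p) \<bullet> nu p"
      using push[OF p notD[OF w] dwp] by auto
    have aK: "dist p (w - s *\<^sub>R nu p) \<le> K * \<epsilon>" using pu sK e0 by linarith
    have ah: "\<epsilon> \<le> Phi p (w - s *\<^sub>R nu p) - (w - s *\<^sub>R nu p - p) \<bullet> nu p" using pu s_ge by linarith
    have hge: "infdist x D \<le> Phi p x - (x - p) \<bullet> nu p" if "x \<notin> D" "dist p x \<le> K * \<epsilon>" for x
    proof (rule h_ge_infdist[OF chp[OF p] L that(1)])
      have "(L + 2) * dist p x \<le> (L + 2) * (K * \<epsilon>)" using that(2) L by (intro mult_left_mono) auto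
      then show "(L + 2) * dist p x < r" using LK2 \<rho>r r by (simp add: algebra_simps)
    qed
    have dpw1: "dist p w1 \<le> \<epsilon> + \<epsilon> / 2" using dist_triangle[of p w1 w] dwp dww by (simp add: dist_commute)
    have conj: "dist p a1 \<le> K * \<epsilon> \<and> \<epsilon> \<le> Phi p a1 - (a1 - p) \<bullet> nu p"
    proof -
      from R1 consider (a) "\<epsilon> \<le> infdist w1 D" "a1 = w1"
        | (b) p1 where "p1 \<in> frontier D" "dist w1 p1 < \<epsilon>" "a1 = w1 - s *\<^sub>R nu p1"
        unfolding Rep_def by blast
      then show "dist p a1 \<le> K * \<epsilon> \<and> \<epsilon> \<le> Phi p a1 - (a1 - p) \<bullet> nu p"
      proof cases
        case a
        have "dist p w1 \<le> K * \<epsilon>" using dpw1 sK s_ge e0 by linarith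
        moreover have "infdist w1 D \<le> Phi p w1 - (w1 - p) \<bullet> nu p"
          using hge[OF notD[OF w1]] calculation by blast
        ultimately show ?thesis using a by simp
      next
        case b
        have pb: "2 * \<epsilon> \<le> infdist a1 D" using pushE[OF w1 b(1,2)] b(3) by simp
        have "dist w1 a1 = s" using b(3) chp[OF b(1)] e0 \<Lambda>1 by (simp add: chart_def dist_norm s_def)
        then have "dist p a1 \<le> \<epsilon> + \<epsilon> / 2 + s" using dist_triangle[of p a1 w1] dpw1 by linarith
        then have daK: "dist p a1 \<le> K * \<epsilon>" using sK by linarith
        have "a1 \<notin> D" using pb e0 notcl closure_subset by force
        then have "infdist a1 D \<le> Phi p a1 - (a1 - p) \<bullet> nu p" using hge daK by blast
        then show ?thesis using daK pb e0 by simp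
      qed
    qed
    then show ?thesis using linkP[OF p aK ah] by blast
  qed
  have linkall: "\<exists>\<eta>>0. \<forall>w1 a a1. w1 \<in> S \<longrightarrow> dist w w1 < \<eta> \<longrightarrow> Rep w a \<longrightarrow> Rep w1 a1 \<longrightarrow> path_component E a a1"
    if w: "w \<in> S" for w
  proof -
    obtain \<rho>w where \<rho>w: "\<rho>w > 0" "ball w \<rho>w \<subseteq> \<Omega>"
      using open_contains_ball[THEN iffD1, OF oO] w unfolding S_def by blast
    show ?thesis
    proof (intro exI[of _ "min (\<epsilon> / 2) \<rho>w"] conjI allI impI)
      show "0 < min (\<epsilon> / 2) \<rho>w" using e0 \<rho>w by simp
      fix w1 a a1 assume w1: "w1 \<in> S" and d: "dist w w1 < min (\<epsilon> / 2) \<rho>w" and Ra: "Rep w a" and Ra1: "Rep w1 a1"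
      have d2: "dist w w1 \<le> \<epsilon> / 2" using d by simp
      from Ra consider (a) "\<epsilon> \<le> infdist w D" "a = w"
        | (b) p where "p \<in> frontier D" "dist w p < \<epsilon>" "a = w - s *\<^sub>R nu p"
        unfolding Rep_def by blast
      then show "path_component E a a1"
      proof cases
        case b
        then show ?thesis using claim[OF w b(1,2) w1 d2 Ra1] by simp
      next
        case a
        from Ra1 consider (a1) "\<epsilon> \<le> infdist w1 D" "a1 = w1"
          | (b1) p1 where "p1 \<in> frontier D" "dist w1 p1 < \<epsilon>" "a1 = w1 - s *\<^sub>R nu p1"
          unfolding Rep_def by blast
        then show ?thesis
        proof cases
          case b1
          have "path_component E a1 a"
            using claim[OF w1 b1(1,2) w _ Ra] b1(3) d2 by (simp add: dist_commute)
          then show ?thesis by (rule path_component_sym)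
        next
          case a1
          show ?thesis unfolding a(2) a1(2)
          proof (rule seg_pc)
            fix u :: real assume u: "0 \<le> u" "u \<le> 1"
            define z where "z = (1 - u) *\<^sub>R w + u *\<^sub>R w1"
            have "dist w z = u * dist w w1"
            proof -
              have eq: "z - w = u *\<^sub>R (w1 - w)" by (simp add: z_def algebra_simps)
              have "dist w z = norm (z - w)" by (simp add: dist_norm norm_minus_commute)
              also have "\<dots> = u * norm (w1 - w)" unfolding eq using u by simp
              finally show ?thesis by (simp add: dist_norm norm_minus_commute)
            qed
            then have dz: "dist w z \<le> dist w w1" using u mult_left_le_one_le[of "dist w w1" u] by simp
            then have "z \<in> \<Omega>" using d \<rho>w by auto
            moreover have "infdist w D \<le> infdist z D + dist w z" by (rule infdist_triangle)
            ultimately show "(1 - u) *\<^sub>R w + u *\<^sub>R w1 \<in> E"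
              using a(1) dz d2 e'le unfolding z_def[symmetric] E_def by simp
          qed
        qed
      qed
    qed
  qed
  note chP = chp[OF P]
  from chP have nuP: "norm (nu P) = 1" and P0: "Phi P P = 0"
    and invP: "\<forall>x t. Phi P (x + t *\<^sub>R nu P) = Phi P x"
    unfolding chart_def by auto
  have eeP: "nu P \<bullet> nu P = 1" using nuP by (simp add: norm_eq_1)
  have seg_inf: "t / \<Lambda> \<le> infdist (P - t *\<^sub>R nu P) D" if t: "0 \<le> t" "t \<le> \<Lambda> * \<epsilon>" for t
  proof -
    have dz: "dist P (P - t *\<^sub>R nu P) = t" using nuP t by (simp add: dist_norm)
    have tr: "t \<le> r / 4" using t \<Lambda>e Ke \<rho>r by linarith
    have zb: "P - t *\<^sub>R nu P \<in> ball P r" using dz tr r by simp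
    have "Phi P (P - t *\<^sub>R nu P) = 0" using invP[rule_format, of P "- t"] P0 by simp
    moreover have "(P - t *\<^sub>R nu P - P) \<bullet> nu P = - t" by (simp add: eeP)
    ultimately have h: "(P - t *\<^sub>R nu P - P) \<bullet> nu P + t \<le> Phi P (P - t *\<^sub>R nu P)" by linarith
    have "min (t / (1 + L)) (r - dist P (P - t *\<^sub>R nu P)) \<le> infdist (P - t *\<^sub>R nu P) D"
      by (rule infdist_below[OF chP L zb h Dne])
    moreover have "t / \<Lambda> \<le> t" using t \<Lambda>1 mult_left_mono[of 1 \<Lambda> t] by (simp add: divide_le_eq)
    ultimately show ?thesis using dz tr r by (simp add: \<Lambda>_def)
  qed
  define t0 where "t0 = \<Lambda> * \<epsilon>"
  define P1 where "P1 = P - t0 *\<^sub>R nu P"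
  have t00: "t0 > 0" using \<Lambda>1 e0 by (simp add: t0_def)
  have P1inf: "\<epsilon> \<le> infdist P1 D" using seg_inf[of t0] t00 \<Lambda>1 by (simp add: t0_def P1_def)
  have dPP1: "dist P P1 = t0" using nuP t00 by (simp add: P1_def dist_norm)
  have t0d: "t0 < \<delta>" using \<Lambda>e Ke \<rho>d \<delta> by (simp add: t0_def)
  have P1O: "P1 \<in> \<Omega>" using nearO[OF PcD] dPP1 t0d by simp
  have P1S: "P1 \<in> S" using P1O P1inf e0 notcl by (simp add: S_def)
  have P1E: "P1 \<in> E" using P1O P1inf e'le e0 by (simp add: E_def)
  have RepP1: "Rep P1 P1" using P1inf by (simp add: Rep_def)
  define A where "A = {w \<in> S. \<exists>a. Rep w a \<and> path_component E P1 a}"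
  define B where "B = {w \<in> S. \<exists>a. Rep w a \<and> \<not> path_component E P1 a}"
  have nbhd: "\<exists>e>0. ball w e \<subseteq> S \<and> (\<forall>w1 a a1. w1 \<in> ball w e \<longrightarrow> Rep w a \<longrightarrow> Rep w1 a1 \<longrightarrow> path_component E a a1)"
    if w: "w \<in> S" for w
  proof -
    obtain \<eta> where \<eta>: "\<eta> > 0" "\<forall>w1 a a1. w1 \<in> S \<longrightarrow> dist w w1 < \<eta> \<longrightarrow> Rep w a \<longrightarrow> Rep w1 a1 \<longrightarrow> path_component E a a1"
      using linkall[OF w] by blast
    obtain \<rho>S where \<rho>S: "\<rho>S > 0" "ball w \<rho>S \<subseteq> S" using open_contains_ball[THEN iffD1, OF oS] w by blast
    show ?thesis
      using \<eta> \<rho>S by (intro exI[of _ "min \<eta> \<rho>S"]) auto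
  qed
  have oA: "open A" unfolding open_contains_ball
  proof
    fix w assume "w \<in> A"
    then obtain a where w: "w \<in> S" and a: "Rep w a" "path_component E P1 a" by (auto simp: A_def)
    obtain e where e: "e > 0" "ball w e \<subseteq> S" "\<forall>w1 a a1. w1 \<in> ball w e \<longrightarrow> Rep w a \<longrightarrow> Rep w1 a1 \<longrightarrow> path_component E a a1"
      using nbhd[OF w] by blast
    have "ball w e \<subseteq> A"
    proof
      fix z assume z: "z \<in> ball w e"
      then have zS: "z \<in> S" using e by blast
      obtain a1 where a1: "Rep z a1" using rep_ex[OF zS] by blast
      have "path_component E a a1" using e(3) z a(1) a1 by blast
      then have "path_component E P1 a1" using a(2) path_component_trans by blast
      then show "z \<in> A" using zS a1 by (auto simp: A_def)
    qed
    then show "\<exists>e>0. ball w e \<subseteq> A" using e by blast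
  qed
  have oB: "open B" unfolding open_contains_ball
  proof
    fix w assume "w \<in> B"
    then obtain a where w: "w \<in> S" and a: "Rep w a" "\<not> path_component E P1 a" by (auto simp: B_def)
    obtain e where e: "e > 0" "ball w e \<subseteq> S" "\<forall>w1 a a1. w1 \<in> ball w e \<longrightarrow> Rep w a \<longrightarrow> Rep w1 a1 \<longrightarrow> path_component E a a1"
      using nbhd[OF w] by blast
    have "ball w e \<subseteq> B"
    proof
      fix z assume z: "z \<in> ball w e"
      then have zS: "z \<in> S" using e by blast
      obtain a1 where a1: "Rep z a1" using rep_ex[OF zS] by blast
      have "path_component E a a1" using e(3) z a(1) a1 by blast
      then have "\<not> path_component E P1 a1" using a(2) path_component_trans path_component_sym by blast
      then show "z \<in> B" using zS a1 by (auto simp: B_def)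
    qed
    then show "\<exists>e>0. ball w e \<subseteq> B" using e by blast
  qed
  have AB: "A \<inter> B \<inter> S = {}"
  proof (rule ccontr)
    assume "A \<inter> B \<inter> S \<noteq> {}"
    then obtain w a a' where w: "w \<in> S" and a: "Rep w a" "path_component E P1 a"
      and a': "Rep w a'" "\<not> path_component E P1 a'" by (auto simp: A_def B_def)
    obtain e where e: "e > 0" "ball w e \<subseteq> S" "\<forall>w1 a a1. w1 \<in> ball w e \<longrightarrow> Rep w a \<longrightarrow> Rep w1 a1 \<longrightarrow> path_component E a a1"
      using nbhd[OF w] by blast
    have "path_component E a a'" using e(1) e(3)[rule_format, of w a a'] a(1) a'(1) by simp
    then show False using a(2) a'(2) path_component_trans by blast
  qed
  have SAB: "S \<subseteq> A \<union> B"
  proof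
    fix w assume w: "w \<in> S"
    obtain a where "Rep w a" using rep_ex[OF w] by blast
    then show "w \<in> A \<union> B" using w by (cases "path_component E P1 a") (auto simp: A_def B_def)
  qed
  have "A \<inter> S = {} \<or> B \<inter> S = {}"
    using connectedD[OF conn[folded S_def] oA oB AB SAB] .
  moreover have "P1 \<in> A \<inter> S" using P1S RepP1 P1E path_component_refl by (auto simp: A_def)
  ultimately have Bempty: "B \<inter> S = {}" by blast
  have allA: "w \<in> S \<Longrightarrow> Rep w a \<Longrightarrow> path_component E P1 a" for w a
    using Bempty by (auto simp: B_def)
  have "frontier \<Omega> \<noteq> {}" using PO bO frontier_eq_empty[of \<Omega>] by auto
  then obtain q where q: "q \<in> frontier \<Omega>" by blast
  have qO: "q \<notin> \<Omega>" using q oO by (simp add: frontier_def interior_open)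
  have "q \<in> closure \<Omega>" using q by (simp add: frontier_def)
  then obtain w where w: "w \<in> \<Omega>" "dist w q < \<delta> / 2" using closure_approachable[of q \<Omega>] \<delta>
    by (metis half_gt_zero)
  have far_inf: "\<delta> / 2 \<le> infdist z D" if "dist z q < \<delta> / 2" for z
  proof (rule infdist_ge[OF Dne], intro ballI)
    fix x assume "x \<in> D"
    then have "\<delta> \<le> dist x q" using sep q by blast
    then show "\<delta> / 2 \<le> dist z x" using dist_triangle[of x q z] that by (simp add: dist_commute)
  qed
  have winf: "\<delta> / 2 \<le> infdist w D" using far_inf w by blast
  have wS: "w \<in> S" using w winf \<delta> notcl by (simp add: S_def)
  have "Rep w w" using winf e_d by (simp add: Rep_def)
  then have "path_component E P1 w" using allA wS by blast
  then obtain \<gamma>2 where \<gamma>2: "path \<gamma>2" "path_image \<gamma>2 \<subseteq> E" "pathstart \<gamma>2 = P1" "pathfinish \<gamma>2 = w"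
    unfolding path_component_def by blast
  define g where "g = \<gamma>2 +++ linepath w q"
  have gpath: "path g" using \<gamma>2 by (simp add: g_def)
  have gstart: "pathstart g = P1" using \<gamma>2 by (simp add: g_def)
  have gfin: "pathfinish g = q" by (simp add: g_def)
  have gimg: "path_image g = path_image \<gamma>2 \<union> closed_segment w q" using \<gamma>2 by (simp add: g_def path_image_join)
  obtain u where u: "0 \<le> u" "u \<le> 1" "\<And>x. 0 \<le> x \<and> x < u \<Longrightarrow> g x \<in> interior \<Omega>"
    "g u \<notin> interior \<Omega>" "u = 0 \<or> g u \<in> closure \<Omega>"
    using subpath_to_frontier_explicit[OF gpath, of \<Omega>] gfin qO by blast
  have u0: "u \<noteq> 0" using u(4) gstart P1O oO by (auto simp: pathstart_def interior_open)
  have guF: "g u \<in> frontier \<Omega>" using u(4,5) u0 by (simp add: frontier_def)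
  define h where "h = subpath 0 u g"
  have hpath: "path h" using gpath u by (simp add: h_def)
  have hstart: "pathstart h = P1" using gstart by (simp add: h_def pathstart_def subpath_def)
  have hfin: "pathfinish h = g u" by (simp add: h_def)
  have himg: "path_image h \<subseteq> path_image g" unfolding h_def by (rule path_image_subpath_subset) (use u in auto)
  have hin: "h t \<in> \<Omega>" if "0 \<le> t" "t < 1" for t
  proof -
    have "h t = g (u * t)" by (simp add: h_def subpath_def)
    moreover have "0 \<le> u * t" "u * t < u" using that u u0 by (auto simp: mult_less_cancel_left1)
    ultimately show ?thesis using u(3) oO by (simp add: interior_open)
  qed
  have gbound: "infdist z D \<ge> min \<epsilon>' (\<delta> / 2) \<and> dist z P \<le> c * infdist z D" if z: "z \<in> path_image g" for z
  proof -
    have c1: "Dm / \<epsilon>' \<ge> 0" "(Dm + \<delta>) / (\<delta> / 2) \<ge> 0" "\<Lambda> \<ge> 0" using Dm e'0 \<delta> \<Lambda>1 by auto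
    from z gimg consider "z \<in> path_image \<gamma>2" | "z \<in> closed_segment w q" by blast
    then show ?thesis
    proof cases
      case 1
      then have zE: "z \<in> E" using \<gamma>2 by blast
      then have zi: "\<epsilon>' \<le> infdist z D" and zO: "z \<in> \<Omega>" by (auto simp: E_def)
      have "dist z P \<le> Dm" using diam zO PO by blast
      also have "Dm = (Dm / \<epsilon>') * \<epsilon>'" using e'0 by simp
      also have "\<dots> \<le> (Dm / \<epsilon>') * infdist z D" using zi c1 by (intro mult_left_mono) auto
      also have "\<dots> \<le> c * infdist z D" unfolding c_def using c1 infdist_nonneg[of z D]
        by (intro mult_right_mono) auto
      finally show ?thesis using zi by simp
    next
      case 2
      have "dist z q \<le> dist w q" using dist_in_closed_segment[OF 2] by (simp add: dist_commute)
      then have dzq: "dist z q < \<delta> / 2" using w by linarith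
      have zi: "\<delta> / 2 \<le> infdist z D" using far_inf dzq by blast
      have a1: "dist z P \<le> dist z w + dist w P" by (rule dist_triangle)
      have a2: "dist z w \<le> dist w q" using dist_in_closed_segment[OF 2] by (simp add: dist_commute)
      have a3: "dist w P \<le> Dm" using diam w PO by blast
      have "dist z P \<le> Dm + \<delta>" using a1 a2 a3 w \<delta> by linarith
      also have "Dm + \<delta> = ((Dm + \<delta>) / (\<delta> / 2)) * (\<delta> / 2)" using \<delta> by simp
      also have "\<dots> \<le> ((Dm + \<delta>) / (\<delta> / 2)) * infdist z D" using zi c1 by (intro mult_left_mono) auto
      also have "\<dots> \<le> c * infdist z D" unfolding c_def using c1 infdist_nonneg[of z D]
        by (intro mult_right_mono) auto
      finally show ?thesis using zi by simp
    qed
  qed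
  have gpos: "infdist z D > 0" if "z \<in> path_image g" for z
    using gbound[OF that] e'0 \<delta> by linarith
  define \<gamma> where "\<gamma> = linepath P P1 +++ h"
  have seg_pt: "(1 - v) *\<^sub>R P + v *\<^sub>R P1 = P - (v * t0) *\<^sub>R nu P" for v
    by (simp add: P1_def algebra_simps)
  have segbound: "dist z P \<le> c * infdist z D \<and> (z \<noteq> P \<longrightarrow> z \<in> \<Omega> - closure D)" if z: "z \<in> closed_segment P P1" for z
  proof -
    obtain v where v: "0 \<le> v" "v \<le> 1" "z = (1 - v) *\<^sub>R P + v *\<^sub>R P1"
      using z unfolding closed_segment_def by blast
    have zv: "z = P - (v * t0) *\<^sub>R nu P" using v seg_pt by simp
    have vt: "0 \<le> v * t0" "v * t0 \<le> \<Lambda> * \<epsilon>" using v t00 mult_left_le_one_le[of t0 v] by (auto simp: t0_def)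
    have inf: "v * t0 / \<Lambda> \<le> infdist z D" using seg_inf[OF vt] zv by simp
    have dzP: "dist z P = v * t0" using zv nuP vt by (simp add: dist_norm)
    have "dist z P = \<Lambda> * (v * t0 / \<Lambda>)" using dzP \<Lambda>1 by simp
    also have "\<dots> \<le> \<Lambda> * infdist z D" using inf \<Lambda>1 by (intro mult_left_mono) auto
    also have "\<dots> \<le> c * infdist z D" unfolding c_def using Dm e'0 \<delta> infdist_nonneg[of z D]
      by (intro mult_right_mono) auto
    finally have b1: "dist z P \<le> c * infdist z D" .
    have "z \<noteq> P \<longrightarrow> z \<in> \<Omega> - closure D"
    proof
      assume "z \<noteq> P"
      then have "dist z P > 0" by simp
      then have "v * t0 > 0" using dzP by linarith
      then have "infdist z D > 0" using inf \<Lambda>1 by (smt (verit) divide_pos_pos)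
      moreover have "z \<in> \<Omega>" using nearO[OF PcD] dzP vt t0d v t00
        by (smt (verit) dist_commute mult_left_le_one_le)
      ultimately show "z \<in> \<Omega> - closure D" using notcl by simp
    qed
    then show ?thesis using b1 by simp
  qed
  show ?thesis
  proof (intro exI[of _ \<gamma>] conjI ballI)
    show "path \<gamma>" using hpath hstart by (simp add: \<gamma>_def)
    show "pathstart \<gamma> = P" by (simp add: \<gamma>_def)
    show "pathfinish \<gamma> \<in> frontier \<Omega>" using hfin guF by (simp add: \<gamma>_def)
  next
    fix z assume "z \<in> path_image \<gamma>"
    then have "z \<in> closed_segment P P1 \<or> z \<in> path_image h"
      using hstart by (simp add: \<gamma>_def path_image_join)
    then show "dist z P \<le> c * infdist z D"
      using segbound gbound himg by blast
  next
    fix t :: real assume t: "t \<in> {0<..<1}"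
    show "\<gamma> t \<in> \<Omega> - closure D"
    proof (cases "t \<le> 1/2")
      case True
      have "\<gamma> t = (1 - 2 * t) *\<^sub>R P + (2 * t) *\<^sub>R P1" using True by (simp add: \<gamma>_def joinpaths_def linepath_def)
      moreover have "(1 - 2 * t) *\<^sub>R P + (2 * t) *\<^sub>R P1 \<in> closed_segment P P1"
        using True t unfolding closed_segment_def by (intro CollectI exI[of _ "2 * t"]) auto
      moreover have "(1 - 2 * t) *\<^sub>R P + (2 * t) *\<^sub>R P1 \<noteq> P"
      proof
        assume "(1 - 2 * t) *\<^sub>R P + (2 * t) *\<^sub>R P1 = P"
        then have "(2 * t) *\<^sub>R (P1 - P) = 0" by (simp add: algebra_simps)
        then show False using t dPP1 t00 by auto
      qed
      ultimately show ?thesis using segbound by simp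
    next
      case False
      have "\<gamma> t = h (2 * t - 1)" using False by (simp add: \<gamma>_def joinpaths_def)
      moreover have "h (2 * t - 1) \<in> \<Omega>" using hin[of "2 * t - 1"] False t by auto
      moreover have "h (2 * t - 1) \<in> path_image g"
        using himg False t unfolding path_image_def by force
      ultimately show ?thesis using gpos notcl by simp
    qed
  qed
qed

theorem lemma4p1:
  fixes r M \<delta> L \<alpha> k :: real
  assumes "DIM('a::euclidean_space) \<ge> 2"
    and "r > 0" and "M > 0" and "\<delta> > 0" and "L > 0"
    and "0 < \<alpha>" and "\<alpha> < 1" and "k > 0" and "k \<noteq> 1"
  shows "\<exists>c>0. \<forall>(\<Omega>::'a set) D.
     open \<Omega> \<and> connected \<Omega> \<and> bounded \<Omega> \<and>
     measure lebesgue \<Omega> \<le> M * r ^ DIM('a) \<and>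
     C1alpha_boundary \<alpha> r L \<Omega> \<and>
     open D \<and> bounded D \<and> closure D \<subseteq> \<Omega> \<and>
     connected (\<Omega> - closure D) \<and>
     (\<forall>x\<in>D. \<forall>y\<in>frontier \<Omega>. dist x y \<ge> \<delta>) \<and>
     C1alpha_boundary \<alpha> r L D
     \<longrightarrow> (\<forall>P\<in>frontier D. \<exists>\<gamma>. path \<gamma> \<and> pathstart \<gamma> = P \<and> pathfinish \<gamma> \<in> frontier \<Omega> \<and>
            (\<forall>t\<in>{0<..<1}. \<gamma> t \<in> \<Omega> - closure D) \<and>
            (\<forall>z\<in>path_image \<gamma>. dist z P \<le> c * infdist z D))"
proof -
  note dim = assms(1) and r = assms(2) and \<delta> = assms(4)
  have L0: "L \<ge> 0" using assms(5) by simp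
  obtain Dm where Dm: "Dm \<ge> 0" and Dmp: "\<forall>\<Omega>::'a set. open \<Omega> \<and> connected \<Omega> \<and> bounded \<Omega> \<and>
            measure lebesgue \<Omega> \<le> M * r ^ DIM('a) \<and> C1alpha_boundary \<alpha> r L \<Omega> \<longrightarrow>
            (\<forall>x\<in>\<Omega>. \<forall>y\<in>\<Omega>. dist x y \<le> Dm)"
    using diam_bound[OF dim r L0, of M \<alpha>] by blast
  define c where "c = (let \<Lambda> = 1 + L; K = 2 * \<Lambda> + 3; \<rho> = 3 * K + L * K + 1;
      \<epsilon> = min r \<delta> / (4 * \<rho>); \<epsilon>' = \<epsilon> / (2 * \<Lambda>) in \<Lambda> + Dm / \<epsilon>' + (Dm + \<delta>) / (\<delta> / 2))"
  have cpos: "c > 0"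
  proof -
    have \<rho>0: "3 * (2 * (1 + L) + 3) + L * (2 * (1 + L) + 3) + 1 > 0" using L0 by (simp add: add_pos_nonneg)
    have e0: "min r \<delta> / (4 * (3 * (2 * (1 + L) + 3) + L * (2 * (1 + L) + 3) + 1)) > 0"
      using \<rho>0 r \<delta> by simp
    define e2 where "e2 = min r \<delta> / (4 * (3 * (2 * (1 + L) + 3) + L * (2 * (1 + L) + 3) + 1)) / (2 * (1 + L))"
    have e2p: "e2 > 0" unfolding e2_def using L0 by (intro divide_pos_pos[OF e0]) simp
    have ceq: "c = (1 + L) + Dm / e2 + (Dm + \<delta>) / (\<delta> / 2)" by (simp only: c_def Let_def e2_def)
    have "Dm / e2 \<ge> 0" using Dm e2p by simp
    moreover have "(Dm + \<delta>) / (\<delta> / 2) \<ge> 0" using Dm \<delta> by simp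
    ultimately show ?thesis unfolding ceq using L0 by linarith
  qed
  show ?thesis
  proof (intro exI[of _ c] conjI allI impI ballI)
    show "c > 0" by (fact cpos)
    fix \<Omega> D :: "'a set" and P
    assume H: "open \<Omega> \<and> connected \<Omega> \<and> bounded \<Omega> \<and>
     measure lebesgue \<Omega> \<le> M * r ^ DIM('a) \<and>
     C1alpha_boundary \<alpha> r L \<Omega> \<and>
     open D \<and> bounded D \<and> closure D \<subseteq> \<Omega> \<and>
     connected (\<Omega> - closure D) \<and>
     (\<forall>x\<in>D. \<forall>y\<in>frontier \<Omega>. dist x y \<ge> \<delta>) \<and>
     C1alpha_boundary \<alpha> r L D" and P: "P \<in> frontier D"
    have diam: "\<forall>x\<in>\<Omega>. \<forall>y\<in>\<Omega>. dist x y \<le> Dm" using Dmp H by blast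
    show "\<exists>\<gamma>. path \<gamma> \<and> pathstart \<gamma> = P \<and> pathfinish \<gamma> \<in> frontier \<Omega> \<and>
            (\<forall>t\<in>{0<..<1}. \<gamma> t \<in> \<Omega> - closure D) \<and>
            (\<forall>z\<in>path_image \<gamma>. dist z P \<le> c * infdist z D)"
      unfolding c_def Let_def
      by (rule main_fixed[OF dim r \<delta> L0 Dm diam]) (use H P in auto)
  qed
qed

end
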